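(* Assume the Rainbow Conjecture (RC) stated in the context holds. Then for all positive integers $n, r$, every digraph on $n$ vertices with no loops and no parallel edges and with minimum out-degree at least $r$ contains a directed cycle of length at most $\lceil n/r \rceil$.
   Context: All digraphs are finite. Rainbow setting: let $G$ be a finite digraph on vertex set $V$ with no loops and no parallel edges (digons allowed), let $k \geq 1$ and $E_1,\dots,E_k \subseteq E(G)$. Each edge $e$ gets the label set $S_e=\{i : e \in E_i\}$, and $G_i=(V,E_i)$. A directed path or directed cycle $P$ in $G$ is rainbow if there is an injective map $\ell: E(P)\to\{1,\dots,k\}$ with $\ell(e)\in S_e$ for every $e \in E(P)$. The Rainbow Conjecture (RC) asserts: for every such $G$, $k$ and $E_1,\dots,E_k$, either $G$ contains a rainbow directed cycle, or there is a vertex $v$ such that the number of vertices $w \neq v$ for which there is a rainbow directed path from $v$ to $w$ is at least $\sum_{i=1}^k \delta^+_{G_i}(v)$, where $\delta^+_{G_i}(v)$ is the out-degree of $v$ in $G_i$. *)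

theory Defs
  imports Complex_Main
begin

(* Edges are ordered pairs, so there are no parallel edges; looplessness
   is an explicit hypothesis; digons (u,v),(v,u) are allowed. *)

definition digraph :: "'a set \<Rightarrow> ('a \<times> 'a) set \<Rightarrow> bool" where
  "digraph V E \<longleftrightarrow> finite V \<and> E \<subseteq> V \<times> V \<and> (\<forall>v. (v, v) \<notin> E)"

definition dpath :: "('a \<times> 'a) set \<Rightarrow> 'a list \<Rightarrow> bool" where
  "dpath E xs \<longleftrightarrow> xs \<noteq> [] \<and> distinct xs \<and>
     (\<forall>i. Suc i < length xs \<longrightarrow> (xs ! i, xs ! Suc i) \<in> E)"

definition path_edges :: "'a list \<Rightarrow> ('a \<times> 'a) set" where
  "path_edges xs = set (zip xs (tl xs))"

(* directed cycle given by its (distinct) vertex sequence; length = number of vertices = number of edges *)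
definition dcycle :: "('a \<times> 'a) set \<Rightarrow> 'a list \<Rightarrow> bool" where
  "dcycle E xs \<longleftrightarrow> length xs \<ge> 2 \<and> dpath E xs \<and> (last xs, hd xs) \<in> E"

definition cycle_edges :: "'a list \<Rightarrow> ('a \<times> 'a) set" where
  "cycle_edges xs = set (zip xs (tl xs @ [hd xs]))"

definition rainbow :: "nat \<Rightarrow> (nat \<Rightarrow> ('a \<times> 'a) set) \<Rightarrow> ('a \<times> 'a) set \<Rightarrow> bool" where
  "rainbow k Es F \<longleftrightarrow>
     (\<exists>l. inj_on l F \<and> (\<forall>e\<in>F. l e \<in> {1..k} \<and> e \<in> Es (l e)))"

definition outdeg :: "('a \<times> 'a) set \<Rightarrow> 'a \<Rightarrow> nat" where
  "outdeg E v = card {w. (v, w) \<in> E}"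

definition rainbow_conjecture :: "'a itself \<Rightarrow> bool" where
  "rainbow_conjecture (_ :: 'a itself) \<longleftrightarrow>
     (\<forall>(V :: 'a set) E k Es.
        digraph V E \<and> V \<noteq> {} \<and> k \<ge> 1 \<and> (\<forall>i\<in>{1..k}. Es i \<subseteq> E) \<longrightarrow>
        (\<exists>xs. dcycle E xs \<and> rainbow k Es (cycle_edges xs)) \<or>
        (\<exists>v\<in>V. card {w. w \<noteq> v \<and>
                    (\<exists>xs. dpath E xs \<and> hd xs = v \<and> last xs = w \<and> rainbow k Es (path_edges xs))}
                 \<ge> (\<Sum>i=1..k. outdeg (Es i) v)))"

end

theory Submission
  imports Defs
begin

lemma card_cycle_edges:
  assumes "distinct xs" "xs \<noteq> []"
  shows "card (cycle_edges xs) = length xs"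
proof -
  have "distinct (zip xs (tl xs @ [hd xs]))" using assms(1) by (rule distinct_zipI1)
  then have "card (cycle_edges xs) = length (zip xs (tl xs @ [hd xs]))"
    unfolding cycle_edges_def by (rule distinct_card)
  also have "\<dots> = length xs" using assms(2) by (cases xs) auto
  finally show ?thesis .
qed

lemma last_in_V:
  assumes "digraph V E" "dpath E xs" "last xs \<noteq> hd xs"
  shows "last xs \<in> V"
proof -
  have ne: "xs \<noteq> []" using assms(2) unfolding dpath_def by auto
  have len: "length xs \<ge> 2"
  proof (rule ccontr)
    assume "\<not> length xs \<ge> 2"
    then have "length xs = 1" using ne by (cases xs) (auto simp: not_less_eq_eq)
    then obtain a where "xs = [a]" by (cases xs) auto
    then show False using assms(3) by simp
  qed
  define i where "i = length xs - 2"
  have "Suc i < length xs" using len unfolding i_def by simp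
  then have "(xs ! i, xs ! Suc i) \<in> E" using assms(2) unfolding dpath_def by blast
  then have "xs ! Suc i \<in> V" using assms(1) unfolding digraph_def by blast
  moreover have "xs ! Suc i = last xs" using len ne unfolding i_def
    by (simp add: last_conv_nth Suc_diff_Suc numeral_2_eq_2)
  ultimately show ?thesis by simp
qed

theorem mainTheorem2:
  assumes RC: "rainbow_conjecture TYPE('a)"
  shows "\<forall>(n::nat) (r::nat) (V :: 'a set) E.
           n \<ge> 1 \<and> r \<ge> 1 \<and> digraph V E \<and> card V = n \<and> (\<forall>v\<in>V. outdeg E v \<ge> r) \<longrightarrow>
           (\<exists>xs. dcycle E xs \<and> int (length xs) \<le> \<lceil>real n / real r\<rceil>)"
proof (intro allI impI)
  fix n r :: nat and V :: "'a set" and E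
  assume H: "n \<ge> 1 \<and> r \<ge> 1 \<and> digraph V E \<and> card V = n \<and> (\<forall>v\<in>V. outdeg E v \<ge> r)"
  then have n1: "n \<ge> 1" and r1: "r \<ge> 1" and G: "digraph V E" and cV: "card V = n"
    and deg: "\<forall>v\<in>V. outdeg E v \<ge> r" by auto
  have finV: "finite V" using G unfolding digraph_def by auto
  have Vne: "V \<noteq> {}" using cV n1 by auto
  define c where "c = \<lceil>real n / real r\<rceil>"
  define k where "k = nat c"
  have cpos: "c \<ge> 1" unfolding c_def using n1 r1 by simp
  have kc: "int k = c" unfolding k_def using cpos by simp
  have k1: "k \<ge> 1" using kc cpos by simp
  have "real n / real r \<le> real_of_int c" unfolding c_def by simp
  then have "real n \<le> real k * real r" using kc r1
    by (simp add: divide_le_eq) (metis of_int_of_nat_eq)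
  then have nkr: "n \<le> k * r" by (metis of_nat_le_iff of_nat_mult)
  define Es where "Es = (\<lambda>i::nat. E)"
  have "(\<exists>xs. dcycle E xs \<and> rainbow k Es (cycle_edges xs)) \<or>
        (\<exists>v\<in>V. card {w. w \<noteq> v \<and>
                    (\<exists>xs. dpath E xs \<and> hd xs = v \<and> last xs = w \<and> rainbow k Es (path_edges xs))}
                 \<ge> (\<Sum>i=1..k. outdeg (Es i) v))"
  proof -
    have "\<forall>i\<in>{1..k}. Es i \<subseteq> E" unfolding Es_def by simp
    then show ?thesis using RC G Vne k1 unfolding rainbow_conjecture_def
      by (elim allE[where x=V] allE[where x=E] allE[where x=k] allE[where x=Es]) simp
  qed
  then show "\<exists>xs. dcycle E xs \<and> int (length xs) \<le> c"
  proof
    assume "\<exists>xs. dcycle E xs \<and> rainbow k Es (cycle_edges xs)"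
    then obtain xs l where cy: "dcycle E xs" and inj: "inj_on l (cycle_edges xs)"
      and lk: "\<forall>e\<in>cycle_edges xs. l e \<in> {1..k}"
      unfolding rainbow_def by blast
    have d: "distinct xs" "xs \<noteq> []" using cy unfolding dcycle_def dpath_def by auto
    have "card (cycle_edges xs) \<le> card {1..k}"
      using card_inj_on_le[OF inj _ finite_atLeastAtMost] lk by blast
    then have "length xs \<le> k" using card_cycle_edges[OF d] by simp
    then show ?thesis using cy kc by auto
  next
    assume "\<exists>v\<in>V. card {w. w \<noteq> v \<and>
                    (\<exists>xs. dpath E xs \<and> hd xs = v \<and> last xs = w \<and> rainbow k Es (path_edges xs))}
                 \<ge> (\<Sum>i=1..k. outdeg (Es i) v)"
    then obtain v S where vV: "v \<in> V" and
      S: "S = {w. w \<noteq> v \<and>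
                    (\<exists>xs. dpath E xs \<and> hd xs = v \<and> last xs = w \<and> rainbow k Es (path_edges xs))}"
      and ge: "card S \<ge> (\<Sum>i=1..k. outdeg (Es i) v)" by blast
    have "(\<Sum>i=1..k. outdeg (Es i) v) = k * outdeg E v" unfolding Es_def by simp
    also have "\<dots> \<ge> k * r" using deg vV by simp
    finally have "card S \<ge> n" using ge nkr by linarith
    moreover have "S \<subseteq> V - {v}"
    proof
      fix w assume "w \<in> S"
      then obtain xs where "w \<noteq> v" "dpath E xs" "hd xs = v" "last xs = w" using S by blast
      then show "w \<in> V - {v}" using last_in_V[OF G] by auto
    qed
    then have "card S \<le> card (V - {v})" using finV by (simp add: card_mono)
    moreover have "card (V - {v}) = n - 1" using cV vV finV by simp
    ultimately show ?thesis using n1 by linarith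
  qed
qed

end
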